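(* For any $\sigma\in S_n$ and $I,J\in\mathcal I_\lambda$, $\widetilde W_{\sigma,I}(z_J,z,h)=0$ unless $J\le_\sigma I$.
   Context: Fix $N,n$, $\lambda\in\mathbb Z_{\ge0}^N$ with $\sum\lambda_k=n$; $\lambda^{(k)}=\lambda_1+\dots+\lambda_k$, $\lambda^{\{1\}}=\lambda^{(1)}+\dots+\lambda^{(N-1)}$. $\mathcal I_\lambda$ = ordered partitions $I=(I_1,\dots,I_N)$ of $\{1,\dots,n\}$ with $|I_k|=\lambda_k$; write $I_1\cup\dots\cup I_k=\{i^{(k)}_1<\dots<i^{(k)}_{\lambda^{(k)}}\}$; $\sigma(I)=(\sigma(I_1),\dots,\sigma(I_N))$. Weight functions: variables $t^{(k)}_a$ ($1\le k\le N-1$, $1\le a\le\lambda^{(k)}$), $z_1,\dots,z_n$, $h$; $t^{(N)}_a=z_a$. $U_I=\prod_{k=1}^{N-1}\prod_{a=1}^{\lambda^{(k)}}\Big(\prod_{c:\,i^{(k+1)}_c<i^{(k)}_a}(1-ht^{(k+1)}_c/t^{(k)}_a)\prod_{c:\,i^{(k+1)}_c>i^{(k)}_a}(1-t^{(k+1)}_c/t^{(k)}_a)\prod_{b=a+1}^{\lambda^{(k)}}\frac{1-ht^{(k)}_b/t^{(k)}_a}{1-t^{(k)}_b/t^{(k)}_a}\Big)$ ($c$ ranges in $1..\lambda^{(k+1)}$), $W_I=(1-h)^{\lambda^{\{1\}}}\mathrm{Sym}_{t^{(1)}}\cdots\mathrm{Sym}_{t^{(N-1)}}U_I$ with $\mathrm{Sym}_{t^{(k)}}$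 the sum over all permutations of $t^{(k)}_1,\dots,t^{(k)}_{\lambda^{(k)}}$. $W_{\sigma,I}(t,z,h)=W_{\sigma^{-1}(I)}(t,z_{\sigma(1)},\dots,z_{\sigma(n)},h)$. $E(t,h)=\prod_{k=1}^{N-1}\prod_{a,b=1}^{\lambda^{(k)}}(1-ht^{(k)}_b/t^{(k)}_a)$, $\widetilde W_{\sigma,I}=W_{\sigma,I}/E$. $f(z_J,z,h)$: substitution $t^{(k)}_a=z_{j^{(k)}_a}$, $J_1\cup\dots\cup J_k=\{j^{(k)}_1<\dots\}$ (for $\widetilde W$, this is the Laurent polynomial $W_{\sigma,I}(z_J,z,h)/E(z_J,h)$). Order $\le_\sigma$: with $\sigma^{-1}(I_1\cup\dots\cup I_k)=\{a^k_1<\dots\}$, $\sigma^{-1}(J_1\cup\dots\cup J_k)=\{b^k_1<\dots\}$, $J\le_\sigma I$ iff $b^k_i\le a^k_i$ for all $k=1,\dots,N-1$ and all $i$. *)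

theory Defs
  imports Complex_Main "HOL-Combinatorics.Permutations"
begin

definition lsum :: "(nat \<Rightarrow> nat) \<Rightarrow> nat \<Rightarrow> nat" where
  "lsum lam k = (\<Sum>m=1..k. lam m)"

definition lsum1 :: "nat \<Rightarrow> (nat \<Rightarrow> nat) \<Rightarrow> nat" where
  "lsum1 N lam = (\<Sum>k=1..N-1. lsum lam k)"

definition cumset :: "(nat \<Rightarrow> nat set) \<Rightarrow> nat \<Rightarrow> nat set" where
  "cumset I k = (\<Union>m\<in>{1..k}. I m)"

text \<open>The a-th smallest element (1-based) of a finite set of naturals.\<close>
definition elt :: "nat set \<Rightarrow> nat \<Rightarrow> nat" where
  "elt S a = sorted_list_of_set S ! (a - 1)"

text \<open>Ordered partitions I = (I_1,...,I_N) of {1..n} with |I_k| = lambda_k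
  (components outside 1..N are fixed to be empty).\<close>
definition ordered_partitions :: "nat \<Rightarrow> nat \<Rightarrow> (nat \<Rightarrow> nat) \<Rightarrow> (nat \<Rightarrow> nat set) set" where
  "ordered_partitions N n lam = {I.
     (\<forall>k\<in>{1..N}. card (I k) = lam k) \<and>
     (\<forall>k\<in>{1..N}. \<forall>m\<in>{1..N}. k \<noteq> m \<longrightarrow> I k \<inter> I m = {}) \<and>
     (\<Union>k\<in>{1..N}. I k) = {1..n} \<and>
     (\<forall>k. k \<notin> {1..N} \<longrightarrow> I k = {})}"

text \<open>The function U_I; t k a stands for t^(k)_a (1 \<le> k \<le> N-1), and t^(N)_c = z_c.\<close>
definition U_fun :: "nat \<Rightarrow> (nat \<Rightarrow> nat) \<Rightarrow> (nat \<Rightarrow> nat set) \<Rightarrow> (nat \<Rightarrow> nat \<Rightarrow> complex)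
    \<Rightarrow> (nat \<Rightarrow> complex) \<Rightarrow> complex \<Rightarrow> complex" where
  "U_fun N lam I t z h =
    (\<Prod>k\<in>{1..N-1}. \<Prod>a\<in>{1..lsum lam k}.
       (\<Prod>c\<in>{1..lsum lam (Suc k)}.
          (let ic = elt (cumset I (Suc k)) c;
               ia = elt (cumset I k) a;
               tc = (if Suc k = N then z c else t (Suc k) c)
           in if ic < ia then 1 - h * tc / t k a
              else if ia < ic then 1 - tc / t k a
              else 1))
       * (\<Prod>b\<in>{a+1..lsum lam k}. (1 - h * t k b / t k a) / (1 - t k b / t k a)))"

definition perm_tuples :: "nat \<Rightarrow> (nat \<Rightarrow> nat) \<Rightarrow> (nat \<Rightarrow> nat \<Rightarrow> nat) set" where
  "perm_tuples N lam = {p. \<forall>k. (k \<in> {1..N-1} \<longrightarrow> p k permutes {1..lsum lam k}) \<and>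
                             (k \<notin> {1..N-1} \<longrightarrow> p k = id)}"

text \<open>W_I = (1-h)^{lambda^{1}} Sym_{t^(1)} ... Sym_{t^(N-1)} U_I.\<close>
definition W_fun :: "nat \<Rightarrow> (nat \<Rightarrow> nat) \<Rightarrow> (nat \<Rightarrow> nat set) \<Rightarrow> (nat \<Rightarrow> nat \<Rightarrow> complex)
    \<Rightarrow> (nat \<Rightarrow> complex) \<Rightarrow> complex \<Rightarrow> complex" where
  "W_fun N lam I t z h = (1 - h) ^ lsum1 N lam *
     (\<Sum>p\<in>perm_tuples N lam. U_fun N lam I (\<lambda>k a. t k (p k a)) z h)"

definition W_sigma :: "nat \<Rightarrow> (nat \<Rightarrow> nat) \<Rightarrow> (nat \<Rightarrow> nat) \<Rightarrow> (nat \<Rightarrow> nat set)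
    \<Rightarrow> (nat \<Rightarrow> nat \<Rightarrow> complex) \<Rightarrow> (nat \<Rightarrow> complex) \<Rightarrow> complex \<Rightarrow> complex" where
  "W_sigma N lam \<sigma> I t z h = W_fun N lam (\<lambda>k. inv \<sigma> ` I k) t (\<lambda>a. z (\<sigma> a)) h"

definition E_fun :: "nat \<Rightarrow> (nat \<Rightarrow> nat) \<Rightarrow> (nat \<Rightarrow> nat \<Rightarrow> complex) \<Rightarrow> complex \<Rightarrow> complex" where
  "E_fun N lam t h = (\<Prod>k\<in>{1..N-1}. \<Prod>a\<in>{1..lsum lam k}. \<Prod>b\<in>{1..lsum lam k}.
       (1 - h * t k b / t k a))"

definition W_tilde :: "nat \<Rightarrow> (nat \<Rightarrow> nat) \<Rightarrow> (nat \<Rightarrow> nat) \<Rightarrow> (nat \<Rightarrow> nat set)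
    \<Rightarrow> (nat \<Rightarrow> nat \<Rightarrow> complex) \<Rightarrow> (nat \<Rightarrow> complex) \<Rightarrow> complex \<Rightarrow> complex" where
  "W_tilde N lam \<sigma> I t z h = W_sigma N lam \<sigma> I t z h / E_fun N lam t h"

text \<open>The point z_J: t^(k)_a = z_{j^(k)_a}.\<close>
definition z_at :: "(nat \<Rightarrow> nat set) \<Rightarrow> (nat \<Rightarrow> complex) \<Rightarrow> nat \<Rightarrow> nat \<Rightarrow> complex" where
  "z_at J z = (\<lambda>k a. z (elt (cumset J k) a))"

definition leq_sigma :: "nat \<Rightarrow> (nat \<Rightarrow> nat) \<Rightarrow> (nat \<Rightarrow> nat set) \<Rightarrow> (nat \<Rightarrow> nat set) \<Rightarrow> bool" where
  "leq_sigma N \<sigma> J I = (\<forall>k\<in>{1..N-1}. \<forall>i\<in>{1..card (cumset I k)}.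
      elt (inv \<sigma> ` cumset J k) i \<le> elt (inv \<sigma> ` cumset I k) i)"

end

theory Submission
  imports Defs
begin

lemma elt_mem: "finite S \<Longrightarrow> a \<in> {1..card S} \<Longrightarrow> elt S a \<in> S"
proof -
  assume f: "finite S" and a: "a \<in> {1..card S}"
  have "sorted_list_of_set S ! (a-1) \<in> set (sorted_list_of_set S)"
    using a f by (intro nth_mem) auto
  thus ?thesis using f by (simp add: elt_def)
qed

lemma elt_mono: "finite S \<Longrightarrow> 1 \<le> a \<Longrightarrow> a \<le> b \<Longrightarrow> b \<le> card S \<Longrightarrow> elt S a \<le> elt S b"
  unfolding elt_def by (intro sorted_nth_mono) auto

lemma elt_onto: "finite S \<Longrightarrow> x \<in> S \<Longrightarrow> \<exists>a\<in>{1..card S}. elt S a = x"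
proof -
  assume f: "finite S" and x: "x \<in> S"
  then have "x \<in> set (sorted_list_of_set S)" by simp
  then obtain j where j: "j < length (sorted_list_of_set S)" "sorted_list_of_set S ! j = x"
    by (auto simp: in_set_conv_nth)
  show ?thesis using j f by (intro bexI[of _ "Suc j"]) (auto simp: elt_def)
qed

lemma elt_interval: "c \<in> {1..n} \<Longrightarrow> elt {1..n} c = c"
proof -
  assume c: "c \<in> {1..n}"
  have "{1..n} = {1..<Suc n}" by auto
  hence "sorted_list_of_set {1..n} = [1..<Suc n]" by simp
  hence "elt {1..n} c = [1..<Suc n] ! (c-1)" by (simp add: elt_def)
  also have "\<dots> = c" using c by (subst nth_upt) auto
  finally show ?thesis .
qed

lemma L0: assumes f: "finite A" and i: "i \<in> {1..card A}" and c: "i \<le> card {x\<in>A. x \<le> v}"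
  shows "elt A i \<le> v"
proof (rule ccontr)
  assume "\<not> elt A i \<le> v"
  hence lt: "v < elt A i" by simp
  let ?L = "sorted_list_of_set A"
  have ss: "sorted_wrt (<) ?L" by simp
  have "{x\<in>A. x \<le> v} \<subseteq> (\<lambda>j. ?L ! j) ` {..<i-1}"
  proof
    fix x assume "x \<in> {x\<in>A. x \<le> v}"
    hence xA: "x \<in> set ?L" and xv: "x \<le> v" using f by auto
    then obtain j where j: "j < length ?L" "?L ! j = x" by (auto simp: in_set_conv_nth)
    have "j < i - 1"
    proof (rule ccontr)
      assume "\<not> j < i - 1"
      hence "i - 1 \<le> j" by simp
      hence "?L ! (i-1) \<le> ?L ! j" using j(1) by (intro sorted_nth_mono) auto
      thus False using lt xv j(2) by (simp add: elt_def)
    qed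
    thus "x \<in> (\<lambda>j. ?L ! j) ` {..<i-1}" using j by auto
  qed
  hence "card {x\<in>A. x \<le> v} \<le> card ((\<lambda>j. ?L ! j) ` {..<i-1})" by (intro card_mono) auto
  also have "\<dots> \<le> i - 1" using card_image_le[of "{..<i-1}" "\<lambda>j. ?L ! j"] by simp
  finally show False using c i by auto
qed

lemma L1: assumes fA: "finite A" and fB: "finite B" and cA: "card A = m" and cB: "card B = m"
  and im: "f ` {1..m} = A" and le: "\<forall>a\<in>{1..m}. f a \<le> elt B a"
  shows "\<forall>i\<in>{1..m}. elt A i \<le> elt B i"
proof
  fix i assume i: "i \<in> {1..m}"
  have inj: "inj_on f {1..m}" using im cA by (intro eq_card_imp_inj_on) auto
  have sub: "f ` {1..i} \<subseteq> {x\<in>A. x \<le> elt B i}"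
  proof
    fix x assume "x \<in> f ` {1..i}"
    then obtain a where a: "a \<in> {1..i}" "x = f a" by auto
    have "f a \<le> elt B a" using le a i by auto
    also have "\<dots> \<le> elt B i" using a i cB fB by (intro elt_mono) auto
    finally show "x \<in> {x\<in>A. x \<le> elt B i}" using a im i by auto
  qed
  have "card (f ` {1..i}) = i" using inj i by (subst card_image) (auto intro: inj_on_subset)
  hence "i \<le> card {x\<in>A. x \<le> elt B i}" using sub fA by (metis (no_types, lifting) card_mono finite_subset mem_Collect_eq subsetI)
  thus "elt A i \<le> elt B i" using L0[OF fA] i cA by auto
qed

lemma down:
  assumes base: "\<forall>a\<in>{1..L N}. m N a \<le> s N a"
  and step: "\<forall>k\<in>{1..<N}. \<forall>a\<in>{1..L k}. \<exists>c\<in>{1..L (Suc k)}. m (Suc k) c = m k a \<and> s (Suc k) c \<le> s k a"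
  shows "\<forall>k\<in>{1..N}. \<forall>a\<in>{1..L k}. m k a \<le> (s k a :: nat)"
proof -
  have "\<forall>k. N - k = j \<longrightarrow> k \<in> {1..N} \<longrightarrow> (\<forall>a\<in>{1..L k}. m k a \<le> s k a)" for j
  proof (induction j)
    case 0
    then show ?case using base by auto
  next
    case (Suc j)
    show ?case
    proof (intro allI impI ballI)
      fix k a assume kj: "N - k = Suc j" and k: "k \<in> {1..N}" and a: "a \<in> {1..L k}"
      have k2: "k \<in> {1..<N}" using kj k by auto
      obtain c where c: "c \<in> {1..L (Suc k)}" "m (Suc k) c = m k a" "s (Suc k) c \<le> s k a"
        using step k2 a by blast
      have "m (Suc k) c \<le> s (Suc k) c" using Suc.IH kj k2 c(1) by auto
      thus "m k a \<le> s k a" using c by auto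
    qed
  qed
  thus ?thesis by auto
qed

lemma elt_image: "finite S \<Longrightarrow> elt S ` {1..card S} = S"
proof
  assume f: "finite S"
  show "elt S ` {1..card S} \<subseteq> S" using elt_mem[OF f] by blast
  show "S \<subseteq> elt S ` {1..card S}" using elt_onto[OF f] by blast
qed

lemma op_D: assumes "X \<in> ordered_partitions N n lam"
  shows "(\<forall>k\<in>{1..N}. card (X k) = lam k)"
    "(\<forall>k\<in>{1..N}. \<forall>m\<in>{1..N}. k \<noteq> m \<longrightarrow> X k \<inter> X m = {})"
    "(\<Union>k\<in>{1..N}. X k) = {1..n}"
    "(\<forall>k. k \<notin> {1..N} \<longrightarrow> X k = {})"
proof -
  have H: "(\<forall>k\<in>{1..N}. card (X k) = lam k) \<and>
     (\<forall>k\<in>{1..N}. \<forall>m\<in>{1..N}. k \<noteq> m \<longrightarrow> X k \<inter> X m = {}) \<and>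
     (\<Union>k\<in>{1..N}. X k) = {1..n} \<and>
     (\<forall>k. k \<notin> {1..N} \<longrightarrow> X k = {})"
    using assms unfolding ordered_partitions_def mem_Collect_eq .
  show "(\<forall>k\<in>{1..N}. card (X k) = lam k)" by (rule conjunct1[OF H])
  show "(\<forall>k\<in>{1..N}. \<forall>m\<in>{1..N}. k \<noteq> m \<longrightarrow> X k \<inter> X m = {})" by (rule conjunct1[OF conjunct2[OF H]])
  show "(\<Union>k\<in>{1..N}. X k) = {1..n}" by (rule conjunct1[OF conjunct2[OF conjunct2[OF H]]])
  show "(\<forall>k. k \<notin> {1..N} \<longrightarrow> X k = {})" by (rule conjunct2[OF conjunct2[OF conjunct2[OF H]]])
qed

lemma op_sub: "X \<in> ordered_partitions N n lam \<Longrightarrow> cumset X k \<subseteq> {1..n}"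
proof
  fix x assume X: "X \<in> ordered_partitions N n lam" and "x \<in> cumset X k"
  then obtain m where m: "x \<in> X m" unfolding cumset_def by blast
  note U = op_D(3)[OF X] and E = op_D(4)[OF X]
  show "x \<in> {1..n}"
  proof (cases "m \<in> {1..N}")
    case True
    hence "x \<in> (\<Union>k\<in>{1..N}. X k)" using m by (rule UN_I)
    thus ?thesis by (simp only: U)
  next
    case False
    hence "X m = {}" using E by simp
    thus ?thesis using m by simp
  qed
qed

lemma op_fin: "X \<in> ordered_partitions N n lam \<Longrightarrow> finite (cumset X k)"
  by (rule finite_subset[OF op_sub]) auto

lemma op_N: assumes X: "X \<in> ordered_partitions N n lam" shows "cumset X N = {1..n}"
  using op_D(3)[OF X] by (simp only: cumset_def)

lemma cumset_mono: "cumset X k \<subseteq> cumset X (Suc k)"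
  unfolding cumset_def by (rule UN_mono) auto

lemma cumset_img: "cumset (\<lambda>k. f ` X k) k = f ` cumset X k"
  unfolding cumset_def by (rule image_UN[symmetric])

lemma op_card: assumes X: "X \<in> ordered_partitions N n lam" and k: "k \<le> N"
  shows "card (cumset X k) = lsum lam k"
proof -
  have fin: "\<And>m. m \<in> {1..k} \<Longrightarrow> finite (X m)"
  proof -
    fix m assume "m \<in> {1..k}"
    have "X m \<subseteq> cumset X k" using \<open>m \<in> {1..k}\<close> unfolding cumset_def by blast
    thus "finite (X m)" using op_fin[OF X, of k] finite_subset by blast
  qed
  note cX = op_D(1)[OF X] and dX = op_D(2)[OF X]
  have dis: "\<forall>i\<in>{1..k}. \<forall>j\<in>{1..k}. i \<noteq> j \<longrightarrow> X i \<inter> X j = {}"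
  proof (intro ballI impI)
    fix i j assume "i \<in> {1..k}" "j \<in> {1..k}" "i \<noteq> j"
    moreover have "i \<in> {1..N}" "j \<in> {1..N}" using calculation k by auto
    ultimately show "X i \<inter> X j = {}" using dX by blast
  qed
  have "card (cumset X k) = (\<Sum>m\<in>{1..k}. card (X m))"
    unfolding cumset_def
  proof (rule card_UN_disjoint)
    show "finite {1..k}" by simp
    show "\<forall>i\<in>{1..k}. finite (X i)" using fin by blast
    show "\<forall>i\<in>{1..k}. \<forall>j\<in>{1..k}. i \<noteq> j \<longrightarrow> X i \<inter> X j = {}" by (rule dis)
  qed
  also have "\<dots> = (\<Sum>m\<in>{1..k}. lam m)"
  proof (rule sum.cong[OF refl])
    fix m assume "m \<in> {1..k}"
    hence "m \<in> {1..N}" using k by simp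
    thus "card (X m) = lam m" using cX by blast
  qed
  finally show ?thesis unfolding lsum_def .
qed


lemma prodnz: "prod f A \<noteq> (0::complex) \<Longrightarrow> finite A \<Longrightarrow> x \<in> A \<Longrightarrow> f x \<noteq> 0"
  using prod_zero_iff by blast

lemma multnz: "(x::complex) * y \<noteq> 0 \<Longrightarrow> x \<noteq> 0"
  by auto

theorem lemma6p2:
  fixes N n :: nat and lam :: "nat \<Rightarrow> nat" and \<sigma> :: "nat \<Rightarrow> nat"
    and I J :: "nat \<Rightarrow> nat set"
  assumes "N \<ge> 1"
    and "(\<Sum>k=1..N. lam k) = n"
    and "\<sigma> permutes {1..n}"
    and "I \<in> ordered_partitions N n lam"
    and "J \<in> ordered_partitions N n lam"
    and "\<not> leq_sigma N \<sigma> J I"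
  shows "\<forall>(z :: nat \<Rightarrow> complex) (h :: complex).
           inj_on z {1..n} \<longrightarrow> (\<forall>i\<in>{1..n}. z i \<noteq> 0) \<longrightarrow>
           W_tilde N lam \<sigma> I (z_at J z) z h = 0"
proof (intro allI impI)
  fix z :: "nat \<Rightarrow> complex" and h :: complex
  assume nz: "\<forall>i\<in>{1..n}. z i \<noteq> 0"
  define I' where "I' = (\<lambda>k. inv \<sigma> ` I k)"
  define z' where "z' = (\<lambda>a. z (\<sigma> a))"
  define t where "t = z_at J z"
  define L where "L = lsum lam"
  have sig: "\<sigma> permutes {1..n}" by (rule assms(3))
  have isig: "inv \<sigma> permutes {1..n}" by (rule permutes_inv[OF sig])
  have injis: "inj (inv \<sigma>)" by (rule permutes_inj[OF isig])
  have LN: "L N = n" unfolding L_def lsum_def by (rule assms(2))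
  have cI': "\<And>k. cumset I' k = inv \<sigma> ` cumset I k" unfolding I'_def by (rule cumset_img)
  have key: "U_fun N lam I' (\<lambda>k a. t k (p k a)) z' h = 0" if p: "p \<in> perm_tuples N lam" for p
  proof (rule ccontr)
    assume U: "U_fun N lam I' (\<lambda>k a. t k (p k a)) z' h \<noteq> 0"
    have pk: "p k permutes {1..L k}" if "k \<in> {1..N-1}" for k
      using p that unfolding perm_tuples_def L_def by blast
    define e where "e = (\<lambda>k a. if k = N then \<sigma> a else elt (cumset J k) (p k a))"
    define m where "m = (\<lambda>k a. inv \<sigma> (e k a))"
    define s where "s = (\<lambda>k a. elt (cumset I' k) a)"
    have F: "(if s (Suc k) c < s k a then 1 - h * z (e (Suc k) c) / z (e k a)
              else if s k a < s (Suc k) c then 1 - z (e (Suc k) c) / z (e k a) else 1) \<noteq> 0"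
      if k: "k \<in> {1..N-1}" and a: "a \<in> {1..L k}" and c: "c \<in> {1..L (Suc k)}" for k a c
    proof -
      have U1: "(\<Prod>a\<in>{1..lsum lam k}.
       (\<Prod>c\<in>{1..lsum lam (Suc k)}.
          (let ic = elt (cumset I' (Suc k)) c;
               ia = elt (cumset I' k) a;
               tc = (if Suc k = N then z' c else t (Suc k) (p (Suc k) c))
           in if ic < ia then 1 - h * tc / t k (p k a)
              else if ia < ic then 1 - tc / t k (p k a)
              else 1))
       * (\<Prod>b\<in>{a+1..lsum lam k}. (1 - h * t k (p k b) / t k (p k a)) / (1 - t k (p k b) / t k (p k a)))) \<noteq> 0"
        using prodnz[OF U[unfolded U_fun_def], of k] k by simp
      have U2: "(\<Prod>c\<in>{1..lsum lam (Suc k)}.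
          (let ic = elt (cumset I' (Suc k)) c;
               ia = elt (cumset I' k) a;
               tc = (if Suc k = N then z' c else t (Suc k) (p (Suc k) c))
           in if ic < ia then 1 - h * tc / t k (p k a)
              else if ia < ic then 1 - tc / t k (p k a)
              else 1)) \<noteq> 0"
        using multnz[OF prodnz[OF U1, of a]] a unfolding L_def by simp
      have U3: "(let ic = elt (cumset I' (Suc k)) c;
               ia = elt (cumset I' k) a;
               tc = (if Suc k = N then z' c else t (Suc k) (p (Suc k) c))
           in if ic < ia then 1 - h * tc / t k (p k a)
              else if ia < ic then 1 - tc / t k (p k a)
              else 1) \<noteq> 0"
        using prodnz[OF U2, of c] c unfolding L_def by simp
      have kN: "k \<noteq> N" using k by auto
      have tk: "t k (p k a) = z (e k a)" unfolding t_def z_at_def e_def using kN by simp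
      have tc: "(if Suc k = N then z' c else t (Suc k) (p (Suc k) c)) = z (e (Suc k) c)"
        unfolding t_def z_at_def e_def z'_def by simp
      show ?thesis using U3 unfolding Let_def tk tc s_def .
    qed
    have eJ: "e k a \<in> cumset J k" if k: "k \<in> {1..N-1}" and a: "a \<in> {1..L k}" for k a
    proof -
      have "p k a \<in> {1..L k}" using permutes_in_image[OF pk[OF k]] a by simp
      moreover have "card (cumset J k) = L k" unfolding L_def using op_card[OF assms(5), of k] k by auto
      ultimately have "elt (cumset J k) (p k a) \<in> cumset J k"
        using elt_mem[OF op_fin[OF assms(5)]] by simp
      thus ?thesis unfolding e_def using k by auto
    qed
    have base: "\<forall>a\<in>{1..L N}. m N a \<le> s N a"
    proof
      fix a assume a: "a \<in> {1..L N}"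
      hence a': "a \<in> {1..n}" using LN by simp
      have "m N a = a" unfolding m_def e_def using permutes_inverses(2)[OF sig] by simp
      moreover have "s N a = a"
      proof -
        have "cumset I' N = {1..n}" unfolding cI' op_N[OF assms(4)] using permutes_image[OF isig] .
        thus ?thesis unfolding s_def using elt_interval[OF a'] by simp
      qed
      ultimately show "m N a \<le> s N a" by simp
    qed
    have step: "\<forall>k\<in>{1..<N}. \<forall>a\<in>{1..L k}. \<exists>c\<in>{1..L (Suc k)}. m (Suc k) c = m k a \<and> s (Suc k) c \<le> s k a"
    proof (intro ballI)
      fix k a assume k0: "k \<in> {1..<N}" and a: "a \<in> {1..L k}"
      have k: "k \<in> {1..N-1}" using k0 by auto
      define x where "x = e k a"
      have xJ: "x \<in> cumset J (Suc k)" using eJ[OF k a] cumset_mono unfolding x_def by blast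
      have xn: "x \<in> {1..n}" using xJ op_sub[OF assms(5)] by blast
      obtain c where c: "c \<in> {1..L (Suc k)}" "e (Suc k) c = x"
      proof (cases "Suc k = N")
        case True
        have "inv \<sigma> x \<in> {1..n}" using permutes_in_image[OF isig] xn by simp
        moreover have "e (Suc k) (inv \<sigma> x) = x" unfolding e_def using True permutes_inverses(1)[OF sig] by simp
        ultimately show ?thesis using that True LN by simp
      next
        case False
        hence k1: "Suc k \<in> {1..N-1}" using k0 by auto
        have cJ: "card (cumset J (Suc k)) = L (Suc k)" unfolding L_def using op_card[OF assms(5)] k0 by simp
        obtain a' where a': "a' \<in> {1..L (Suc k)}" "elt (cumset J (Suc k)) a' = x"
          using elt_onto[OF op_fin[OF assms(5)] xJ] cJ by auto
        have "a' \<in> p (Suc k) ` {1..L (Suc k)}" using permutes_image[OF pk[OF k1]] a'(1) by simp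
        then obtain c where "c \<in> {1..L (Suc k)}" "p (Suc k) c = a'" by blast
        moreover have "e (Suc k) c = elt (cumset J (Suc k)) (p (Suc k) c)" unfolding e_def using False by simp
        ultimately show ?thesis using that a' by simp
      qed
      have "\<not> s k a < s (Suc k) c"
      proof
        assume lt: "s k a < s (Suc k) c"
        have "e k a \<in> {1..n}" using xn unfolding x_def .
        hence "z (e k a) \<noteq> 0" using nz by blast
        hence "1 - z (e (Suc k) c) / z (e k a) = 0" using c(2) unfolding x_def by simp
        thus False using F[OF k a c(1)] lt by simp
      qed
      hence "s (Suc k) c \<le> s k a" by simp
      moreover have "m (Suc k) c = m k a" unfolding m_def using c(2) unfolding x_def by simp
      ultimately show "\<exists>c\<in>{1..L (Suc k)}. m (Suc k) c = m k a \<and> s (Suc k) c \<le> s k a" using c(1) by blast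
    qed
    have D: "\<forall>k\<in>{1..N}. \<forall>a\<in>{1..L k}. m k a \<le> s k a" by (rule down[OF base step])
    have "leq_sigma N \<sigma> J I"
      unfolding leq_sigma_def
    proof (intro ballI)
      fix k i assume k: "k \<in> {1..N-1}" and i: "i \<in> {1..card (cumset I k)}"
      have kN: "k \<le> N" "k \<noteq> N" using k by auto
      have cI: "card (cumset I k) = L k" unfolding L_def using op_card[OF assms(4) kN(1)] .
      have cJ: "card (cumset J k) = L k" unfolding L_def using op_card[OF assms(5) kN(1)] .
      have fI: "finite (cumset I k)" and fJ: "finite (cumset J k)" using op_fin assms(4,5) by blast+
      have im: "m k ` {1..L k} = inv \<sigma> ` cumset J k"
      proof -
        have "m k ` {1..L k} = inv \<sigma> ` (elt (cumset J k) ` (p k ` {1..L k}))"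
          unfolding m_def e_def using kN(2) by (simp add: image_image)
        also have "p k ` {1..L k} = {1..L k}" by (rule permutes_image[OF pk[OF k]])
        also have "elt (cumset J k) ` {1..L k} = cumset J k" using elt_image[OF fJ] cJ by simp
        finally show ?thesis .
      qed
      have le: "\<forall>a\<in>{1..L k}. m k a \<le> elt (inv \<sigma> ` cumset I k) a"
        using D k unfolding s_def cI' by auto
      have "\<forall>i\<in>{1..L k}. elt (inv \<sigma> ` cumset J k) i \<le> elt (inv \<sigma> ` cumset I k) i"
      proof (rule L1[OF _ _ _ _ im le])
        show "finite (inv \<sigma> ` cumset J k)" using fJ by simp
        show "finite (inv \<sigma> ` cumset I k)" using fI by simp
        show "card (inv \<sigma> ` cumset J k) = L k" using cJ card_image[OF inj_on_subset[OF injis]] by simp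
        show "card (inv \<sigma> ` cumset I k) = L k" using cI card_image[OF inj_on_subset[OF injis]] by simp
      qed
      thus "elt (inv \<sigma> ` cumset J k) i \<le> elt (inv \<sigma> ` cumset I k) i" using i cI by simp
    qed
    thus False using assms(6) by simp
  qed
  have "W_sigma N lam \<sigma> I t z h = 0"
  proof -
    have "(\<Sum>p\<in>perm_tuples N lam. U_fun N lam I' (\<lambda>k a. t k (p k a)) z' h) = 0"
      using key by simp
    thus ?thesis unfolding W_sigma_def W_fun_def I'_def z'_def by simp
  qed
  thus "W_tilde N lam \<sigma> I (z_at J z) z h = 0" unfolding W_tilde_def t_def by simp
qed

end
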